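(* Let $C$ be a program with total semantics and $e,e'$ expressions, and let $\Phi_{\langle C,e,e'\rangle}(f)(\sigma)=[\![e]\!](\sigma)\cdot f^\dagger([\![C]\!](\sigma))+[\![e']\!](\sigma)\cdot\eta(\sigma)$ for $f:\Sigma\to\mathcal W(\Sigma)$ and $\sigma\in\Sigma$. If $\Phi_{\langle C,e,e'\rangle}$ is a total function, then it is Scott continuous with respect to the pointwise order: $f_1\sqsubseteq^\bullet f_2$ iff $f_1(\sigma)\sqsubseteq f_2(\sigma)$ for all $\sigma\in\Sigma$.
   Context: $\mathcal A=\langle U,+,\cdot,\mathbf 0,\mathbf 1\rangle$ is a partial semiring ($+$ commutative, associative, possibly partial, unit $\mathbf 0$; $\cdot$ total, associative, unit $\mathbf 1$; two-sided distributivity; $\mathbf 0$ annihilates), naturally ordered ($u\le v$ iff $\exists w.\,u+w=v$ is a partial order), Scott continuous ($+$ and $\cdot$ preserve suprema of directed sets in each argument), with a top element. Infinite sums are suprema of finite partial sums. $\mathcal W(X)$: maps $m:X\to U$ with countable support $\{x:m(x)\ne\mathbf 0\}$ and defined mass, operations pointwise, $m_1\sqsubseteq m_2$ iff $m_1+m=m_2$ for some $m$. $\eta(x)(y)=\mathbf 1$ if $x=y$ else $\mathbf 0$; $f^\dagger(m)(y)=\sum_{x\in\mathrm{supp}(m)}m(x)\cdot f(x)(y)$. Programs over states $\Sigma$ are built from $\mathsf{skip}$, $;$, $+$, $\mathsf{assume}\ e$, iteration $C^{\langle e,e'\rangle}$ and atomic actions $a$ with $[\![a]\!]:\Sigma\to\mathcal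 W(\Sigma)$, with denotation $[\![C]\!]:\Sigma\to\mathcal W(\Sigma)$ (possibly partial because $+$ is partial). An expression $e$ is either a test $b$ (a Boolean combination of $\mathsf{true},\mathsf{false}$ and primitive tests $t\subseteq\Sigma$, with $[\![b]\!](\sigma)\in\{\mathbf 0,\mathbf 1\}$ and $[\![t]\!](\sigma)=\mathbf 1$ iff $\sigma\in t$) or a weight $u\in U$ with $[\![u]\!](\sigma)=u$. *)

theory Defs
  imports "HOL-Library.Countable_Set"
begin

record 'u psr =
  pplus  :: "'u \<Rightarrow> 'u \<Rightarrow> 'u option"
  ptimes :: "'u \<Rightarrow> 'u \<Rightarrow> 'u"
  pzero  :: 'u
  pone   :: 'u

definition nle :: "'u psr \<Rightarrow> 'u \<Rightarrow> 'u \<Rightarrow> bool" where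
  "nle A u v \<longleftrightarrow> (\<exists>w. pplus A u w = Some v)"

definition directed_rel :: "('a \<Rightarrow> 'a \<Rightarrow> bool) \<Rightarrow> 'a set \<Rightarrow> bool" where
  "directed_rel le D \<longleftrightarrow> D \<noteq> {} \<and> (\<forall>x\<in>D. \<forall>y\<in>D. \<exists>z\<in>D. le x z \<and> le y z)"

definition is_lub_in :: "('a \<Rightarrow> bool) \<Rightarrow> ('a \<Rightarrow> 'a \<Rightarrow> bool) \<Rightarrow> 'a set \<Rightarrow> 'a \<Rightarrow> bool" where
  "is_lub_in P le S s \<longleftrightarrow> P s \<and> (\<forall>x\<in>S. le x s) \<and> (\<forall>b. P b \<and> (\<forall>x\<in>S. le x b) \<longrightarrow> le s b)"

definition scott_continuous_on ::
  "('a \<Rightarrow> bool) \<Rightarrow> ('a \<Rightarrow> 'a \<Rightarrow> bool) \<Rightarrow> ('a \<Rightarrow> 'a) \<Rightarrow> bool" where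
  "scott_continuous_on P le F \<longleftrightarrow>
     (\<forall>D s. (\<forall>x\<in>D. P x) \<and> directed_rel le D \<and> is_lub_in P le D s
        \<longrightarrow> is_lub_in P le (F ` D) (F s))"

definition partial_semiring :: "'u psr \<Rightarrow> bool" where
  "partial_semiring A \<longleftrightarrow>
     (\<forall>a b. pplus A a b = pplus A b a) \<and>
     (\<forall>a b c. Option.bind (pplus A a b) (\<lambda>x. pplus A x c)
              = Option.bind (pplus A b c) (\<lambda>y. pplus A a y)) \<and>
     (\<forall>a. pplus A a (pzero A) = Some a) \<and>
     (\<forall>a b c. ptimes A (ptimes A a b) c = ptimes A a (ptimes A b c)) \<and>
     (\<forall>a. ptimes A (pone A) a = a \<and> ptimes A a (pone A) = a) \<and>
     (\<forall>a b c d. pplus A b c = Some d \<longrightarrow>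
                 pplus A (ptimes A a b) (ptimes A a c) = Some (ptimes A a d)) \<and>
     (\<forall>a b c d. pplus A b c = Some d \<longrightarrow>
                 pplus A (ptimes A b a) (ptimes A c a) = Some (ptimes A d a)) \<and>
     (\<forall>a. ptimes A (pzero A) a = pzero A \<and> ptimes A a (pzero A) = pzero A)"

definition naturally_ordered :: "'u psr \<Rightarrow> bool" where
  "naturally_ordered A \<longleftrightarrow>
     (\<forall>u. nle A u u) \<and>
     (\<forall>u v w. nle A u v \<and> nle A v w \<longrightarrow> nle A u w) \<and>
     (\<forall>u v. nle A u v \<and> nle A v u \<longrightarrow> u = v)"

text \<open>Scott continuity of the semiring: the natural order is directed complete,
and + and * preserve suprema of directed sets in each argument (for + whenever
the sum with the supremum is defined; + is commutative so one argument suffices).\<close>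
definition scott_continuous_psr :: "'u psr \<Rightarrow> bool" where
  "scott_continuous_psr A \<longleftrightarrow>
     (\<forall>D. directed_rel (nle A) D \<longrightarrow> (\<exists>s. is_lub_in (\<lambda>_. True) (nle A) D s)) \<and>
     (\<forall>D s b r. directed_rel (nle A) D \<and> is_lub_in (\<lambda>_. True) (nle A) D s
        \<and> pplus A s b = Some r
        \<longrightarrow> is_lub_in (\<lambda>_. True) (nle A) {x. \<exists>d\<in>D. pplus A d b = Some x} r) \<and>
     (\<forall>D s b. directed_rel (nle A) D \<and> is_lub_in (\<lambda>_. True) (nle A) D s
        \<longrightarrow> is_lub_in (\<lambda>_. True) (nle A) ((\<lambda>d. ptimes A d b) ` D) (ptimes A s b)
          \<and> is_lub_in (\<lambda>_. True) (nle A) ((\<lambda>d. ptimes A b d) ` D) (ptimes A b s))"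

definition has_top :: "'u psr \<Rightarrow> bool" where
  "has_top A \<longleftrightarrow> (\<exists>t. \<forall>u. nle A u t)"

definition outcome_algebra :: "'u psr \<Rightarrow> bool" where
  "outcome_algebra A \<longleftrightarrow> partial_semiring A \<and> naturally_ordered A
      \<and> scott_continuous_psr A \<and> has_top A"

inductive fsum :: "'u psr \<Rightarrow> ('a \<Rightarrow> 'u) \<Rightarrow> 'a set \<Rightarrow> 'u \<Rightarrow> bool"
  for A :: "'u psr" and f :: "'a \<Rightarrow> 'u" where
  fsum_empty: "fsum A f {} (pzero A)"
| fsum_insert: "x \<notin> F \<Longrightarrow> fsum A f F v \<Longrightarrow> pplus A (f x) v = Some w
                  \<Longrightarrow> fsum A f (insert x F) w"

definition psum :: "'u psr \<Rightarrow> ('a \<Rightarrow> 'u) \<Rightarrow> 'a set \<Rightarrow> 'u \<Rightarrow> bool" where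
  "psum A f S s \<longleftrightarrow>
     (\<forall>F. finite F \<and> F \<subseteq> S \<longrightarrow> (\<exists>v. fsum A f F v)) \<and>
     is_lub_in (\<lambda>_. True) (nle A) {v. \<exists>F. finite F \<and> F \<subseteq> S \<and> fsum A f F v} s"

definition supp :: "'u psr \<Rightarrow> ('x \<Rightarrow> 'u) \<Rightarrow> 'x set" where
  "supp A m = {x. m x \<noteq> pzero A}"

definition isW :: "'u psr \<Rightarrow> ('x \<Rightarrow> 'u) \<Rightarrow> bool" where
  "isW A m \<longleftrightarrow> countable (supp A m) \<and> (\<exists>s. psum A m (supp A m) s)"

definition Wle :: "'u psr \<Rightarrow> ('x \<Rightarrow> 'u) \<Rightarrow> ('x \<Rightarrow> 'u) \<Rightarrow> bool" where
  "Wle A m1 m2 \<longleftrightarrow> (\<exists>m. isW A m \<and> (\<forall>x. pplus A (m1 x) (m x) = Some (m2 x)))"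

definition eta :: "'u psr \<Rightarrow> 'x \<Rightarrow> ('x \<Rightarrow> 'u)" where
  "eta A x = (\<lambda>y. if x = y then pone A else pzero A)"

definition wplus :: "'u psr \<Rightarrow> ('x \<Rightarrow> 'u) \<Rightarrow> ('x \<Rightarrow> 'u) \<Rightarrow> ('x \<Rightarrow> 'u) option" where
  "wplus A m1 m2 =
     (let r = (\<lambda>x. the (pplus A (m1 x) (m2 x)))
      in if (\<forall>x. pplus A (m1 x) (m2 x) \<noteq> None) \<and> isW A r then Some r else None)"

definition wscale :: "'u psr \<Rightarrow> 'u \<Rightarrow> ('x \<Rightarrow> 'u) \<Rightarrow> ('x \<Rightarrow> 'u)" where
  "wscale A u m = (\<lambda>x. ptimes A u (m x))"

text \<open>Kleisli extension f-dagger: f\<dagger>(m)(y) = sum over supp m of m(x) * f(x)(y);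
defined iff every such sum is defined and the result lies in W(Y).\<close>
definition kext :: "'u psr \<Rightarrow> ('x \<Rightarrow> ('y \<Rightarrow> 'u)) \<Rightarrow> ('x \<Rightarrow> 'u) \<Rightarrow> ('y \<Rightarrow> 'u) option" where
  "kext A f m =
     (let r = (\<lambda>y. THE s. psum A (\<lambda>x. ptimes A (m x) (f x y)) (supp A m) s)
      in if (\<forall>y. \<exists>s. psum A (\<lambda>x. ptimes A (m x) (f x y)) (supp A m) s) \<and> isW A r
         then Some r else None)"

datatype 's test = TTrue | TFalse | TPrim "'s set" | TNot "'s test"
  | TAnd "'s test" "'s test" | TOr "'s test" "'s test"

fun test_sem :: "'s test \<Rightarrow> 's \<Rightarrow> bool" where
  "test_sem TTrue s = True"
| "test_sem TFalse s = False"
| "test_sem (TPrim t) s = (s \<in> t)"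
| "test_sem (TNot b) s = (\<not> test_sem b s)"
| "test_sem (TAnd b1 b2) s = (test_sem b1 s \<and> test_sem b2 s)"
| "test_sem (TOr b1 b2) s = (test_sem b1 s \<or> test_sem b2 s)"

datatype ('s, 'u) expr = ETest "'s test" | EWeight 'u

fun expr_sem :: "'u psr \<Rightarrow> ('s, 'u) expr \<Rightarrow> 's \<Rightarrow> 'u" where
  "expr_sem A (ETest b) s = (if test_sem b s then pone A else pzero A)"
| "expr_sem A (EWeight u) s = u"

text \<open>c is the (total) denotation of the program C.\<close>
definition Phi :: "'u psr \<Rightarrow> ('s \<Rightarrow> ('s \<Rightarrow> 'u)) \<Rightarrow> ('s, 'u) expr \<Rightarrow> ('s, 'u) expr
                   \<Rightarrow> ('s \<Rightarrow> ('s \<Rightarrow> 'u)) \<Rightarrow> 's \<Rightarrow> ('s \<Rightarrow> 'u) option" where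
  "Phi A c e e' f \<sigma> =
     Option.bind (kext A f (c \<sigma>))
       (\<lambda>m. wplus A (wscale A (expr_sem A e \<sigma>) m) (wscale A (expr_sem A e' \<sigma>) (eta A \<sigma>)))"

definition Phi_total :: "'u psr \<Rightarrow> ('s \<Rightarrow> ('s \<Rightarrow> 'u)) \<Rightarrow> ('s, 'u) expr \<Rightarrow> ('s, 'u) expr \<Rightarrow> bool" where
  "Phi_total A c e e' \<longleftrightarrow>
     (\<forall>f. (\<forall>\<sigma>. isW A (f \<sigma>)) \<longrightarrow> (\<forall>\<sigma>. Phi A c e e' f \<sigma> \<noteq> None))"

definition ple :: "'u psr \<Rightarrow> ('s \<Rightarrow> ('t \<Rightarrow> 'u)) \<Rightarrow> ('s \<Rightarrow> ('t \<Rightarrow> 'u)) \<Rightarrow> bool" where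
  "ple A f1 f2 \<longleftrightarrow> (\<forall>\<sigma>. Wle A (f1 \<sigma>) (f2 \<sigma>))"

end

theory Submission
  imports Defs
begin

lemma bind_SomeE: "Option.bind m f = Some r \<Longrightarrow> \<exists>x. m = Some x \<and> f x = Some r"
  by (cases m) auto

lemma isl_P: "is_lub_in P le S s \<Longrightarrow> P s" unfolding is_lub_in_def by blast
lemma isl_ub: "is_lub_in P le S s \<Longrightarrow> x \<in> S \<Longrightarrow> le x s" unfolding is_lub_in_def by blast
lemma isl_least: "is_lub_in P le S s \<Longrightarrow> P b \<Longrightarrow> (\<forall>x\<in>S. le x b) \<Longrightarrow> le s b"
  unfolding is_lub_in_def by blast

locale OA =
  fixes A :: "'u psr"
  assumes oa: "outcome_algebra A"
begin

abbreviation lub where "lub S s \<equiv> is_lub_in (\<lambda>_. True) (nle A) S s"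

lemma ps: "partial_semiring A" using oa unfolding outcome_algebra_def by simp
lemma comm: "pplus A a b = pplus A b a" using ps unfolding partial_semiring_def by blast
lemma assoc: "Option.bind (pplus A a b) (\<lambda>x. pplus A x c) = Option.bind (pplus A b c) (\<lambda>y. pplus A a y)"
  using ps unfolding partial_semiring_def by blast
lemma unit_r: "pplus A a (pzero A) = Some a" using ps unfolding partial_semiring_def by blast
lemma unit_l: "pplus A (pzero A) a = Some a" using unit_r comm by metis
lemma distl: "pplus A b c = Some d \<Longrightarrow> pplus A (ptimes A a b) (ptimes A a c) = Some (ptimes A a d)"
  using ps unfolding partial_semiring_def by blast
lemma no: "naturally_ordered A" using oa unfolding outcome_algebra_def by simp
lemma le_refl: "nle A u u" using no unfolding naturally_ordered_def by blast
lemma le_trans: "nle A u v \<Longrightarrow> nle A v w \<Longrightarrow> nle A u w" using no unfolding naturally_ordered_def by blast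
lemma le_antisym: "nle A u v \<Longrightarrow> nle A v u \<Longrightarrow> u = v" using no unfolding naturally_ordered_def by blast
lemma le_zero: "nle A (pzero A) a" unfolding nle_def using unit_l by blast
lemma le_addI: "pplus A a b = Some c \<Longrightarrow> nle A a c" by (auto simp: nle_def)
lemma le_addI2: "pplus A a b = Some c \<Longrightarrow> nle A b c" using comm le_addI by metis
lemma sc: "scott_continuous_psr A" using oa unfolding outcome_algebra_def by simp
lemma dcpo: "directed_rel (nle A) D \<Longrightarrow> \<exists>s. lub D s"
  using sc unfolding scott_continuous_psr_def by blast
lemma cont_add: "directed_rel (nle A) D \<Longrightarrow> lub D s \<Longrightarrow> pplus A s b = Some r
   \<Longrightarrow> lub {x. \<exists>d\<in>D. pplus A d b = Some x} r"
  using sc unfolding scott_continuous_psr_def by blast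
lemma cont_mul: "directed_rel (nle A) D \<Longrightarrow> lub D s \<Longrightarrow> lub ((\<lambda>d. ptimes A b d) ` D) (ptimes A b s)"
  using sc unfolding scott_continuous_psr_def by blast
lemma mul_mono: "nle A b c \<Longrightarrow> nle A (ptimes A a b) (ptimes A a c)"
  unfolding nle_def using distl by blast
lemma lub_unique: "lub S s \<Longrightarrow> lub S t \<Longrightarrow> s = t"
  unfolding is_lub_in_def using le_antisym by blast

lemma add_mono1:
  assumes "nle A a a'" "pplus A a' b = Some r"
  shows "\<exists>q. pplus A a b = Some q \<and> nle A q r"
proof -
  obtain t where t: "pplus A a t = Some a'" using assms(1) unfolding nle_def by blast
  have e1: "Option.bind (pplus A a t) (\<lambda>x. pplus A x b) = Some r"
    using t assms(2) by simp
  have e3: "Option.bind (pplus A t b) (\<lambda>y. pplus A a y) = Some r"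
    using trans[OF sym[OF assoc[of a t b]] e1] .
  obtain y where y: "pplus A t b = Some y" "pplus A a y = Some r" using bind_SomeE[OF e3] by blast
  have "pplus A b t = Some y" using y(1) comm[of b t] by simp
  then have e2: "Option.bind (pplus A b t) (\<lambda>y. pplus A a y) = Some r" using y(2) by simp
  have e4: "Option.bind (pplus A a b) (\<lambda>x. pplus A x t) = Some r" using trans[OF assoc[of a b t] e2] .
  obtain q where "pplus A a b = Some q" "pplus A q t = Some r" using bind_SomeE[OF e4] by blast
  thus ?thesis unfolding nle_def by blast
qed

lemma add_mono:
  assumes "nle A a a'" "nle A b b'" "pplus A a' b' = Some r"
  shows "\<exists>q. pplus A a b = Some q \<and> nle A q r"
proof -
  obtain q1 where q1: "pplus A a b' = Some q1" "nle A q1 r" using add_mono1[OF assms(1,3)] by blast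
  have "pplus A b' a = Some q1" using q1 comm by metis
  then obtain q where "pplus A b a = Some q" "nle A q q1" using add_mono1[OF assms(2)] by blast
  thus ?thesis using q1 comm le_trans by metis
qed

lemma fsum_remove: "fsum A h G w \<Longrightarrow> x \<in> G \<Longrightarrow> \<exists>w0. fsum A h (G - {x}) w0 \<and> pplus A (h x) w0 = Some w"
proof (induction arbitrary: x rule: fsum.induct)
  case fsum_empty thus ?case by simp
next
  case (fsum_insert z F v w)
  show ?case
  proof (cases "z = x")
    case True
    with fsum_insert show ?thesis by (metis Diff_insert_absorb)
  next
    case False
    hence "x \<in> F" using fsum_insert by simp
    then obtain v0 where v0: "fsum A h (F - {x}) v0" "pplus A (h x) v0 = Some v"
      using fsum_insert.IH by blast
    have f1: "Option.bind (pplus A (h x) v0) (\<lambda>y. pplus A (h z) y) = Some w"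
      using v0(2) fsum_insert.hyps(3) by simp
    have f2: "Option.bind (pplus A (h z) (h x)) (\<lambda>x'. pplus A x' v0) = Some w"
      using trans[OF assoc[of "h z" "h x" v0] f1] .
    have f3: "Option.bind (pplus A (h x) (h z)) (\<lambda>x'. pplus A x' v0) = Some w"
      using f2 comm[of "h z" "h x"] by simp
    have f4: "Option.bind (pplus A (h z) v0) (\<lambda>y. pplus A (h x) y) = Some w"
      using trans[OF sym[OF assoc[of "h x" "h z" v0]] f3] .
    obtain w0 where w0: "pplus A (h z) v0 = Some w0" "pplus A (h x) w0 = Some w"
      using bind_SomeE[OF f4] by blast
    have "z \<notin> F - {x}" using fsum_insert by simp
    hence "fsum A h (insert z (F - {x})) w0" using v0(1) w0(1) fsum.fsum_insert by metis
    moreover have "insert z (F - {x}) = insert z F - {x}" using False by auto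
    ultimately show ?thesis using w0(2) by metis
  qed
qed

lemma fsum_mono: "fsum A f F v \<Longrightarrow> fsum A h F w \<Longrightarrow> (\<forall>x\<in>F. nle A (f x) (h x)) \<Longrightarrow> nle A v w"
proof (induction arbitrary: w rule: fsum.induct)
  case fsum_empty
  then have "w = pzero A" by (cases rule: fsum.cases) auto
  then show ?case using le_refl by simp
next
  case (fsum_insert x F v w')
  obtain w0 where w0: "fsum A h F w0" "pplus A (h x) w0 = Some w"
    using fsum_remove[OF fsum_insert.prems(1), of x] fsum_insert.hyps(1) by auto
  have "nle A v w0" using fsum_insert.IH[OF w0(1)] fsum_insert.prems(2) by simp
  moreover have "nle A (f x) (h x)" using fsum_insert.prems(2) by simp
  ultimately obtain q where "pplus A (f x) v = Some q" "nle A q w" using add_mono w0(2) by metis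
  then show ?case using fsum_insert.hyps(3) by simp
qed

lemma fsum_down: "fsum A h F w \<Longrightarrow> (\<forall>x\<in>F. nle A (f x) (h x)) \<Longrightarrow> \<exists>v. fsum A f F v \<and> nle A v w"
proof (induction rule: fsum.induct)
  case fsum_empty
  then show ?case using fsum.fsum_empty le_refl by blast
next
  case (fsum_insert x F v w)
  then obtain v0 where v0: "fsum A f F v0" "nle A v0 v" by auto
  have "nle A (f x) (h x)" using fsum_insert.prems by simp
  then obtain q where q: "pplus A (f x) v0 = Some q" "nle A q w" using add_mono[OF _ v0(2) fsum_insert.hyps(3)] by blast
  have "fsum A f (insert x F) q" using fsum.fsum_insert[OF fsum_insert.hyps(1) v0(1) q(1)] .
  then show ?case using q(2) by blast
qed

lemma fsum_sub:
  assumes "fsum A f F v" "finite H"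
  shows "\<forall>w. fsum A f (F \<union> H) w \<longrightarrow> nle A v w"
  using assms(2)
proof (induction H rule: finite_induct)
  case empty
  then show ?case using fsum_mono[OF assms(1)] le_refl by simp
next
  case (insert x H)
  show ?case
  proof (intro allI impI)
    fix w assume w: "fsum A f (F \<union> insert x H) w"
    show "nle A v w"
    proof (cases "x \<in> F \<union> H")
      case True
      then have "F \<union> insert x H = F \<union> H" by auto
      then show ?thesis using insert.IH w by simp
    next
      case False
      obtain w0 where w0: "fsum A f (F \<union> insert x H - {x}) w0" "pplus A (f x) w0 = Some w"
        using fsum_remove[OF w, of x] by auto
      have "F \<union> insert x H - {x} = F \<union> H" using False by auto
      then have "nle A v w0" using insert.IH w0(1) by simp
      then show ?thesis using le_addI2[OF w0(2)] le_trans by blast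
    qed
  qed
qed

lemma psum_lub: "psum A f X s \<Longrightarrow> lub {v. \<exists>F. finite F \<and> F \<subseteq> X \<and> fsum A f F v} s"
  unfolding psum_def by (rule conjunct2)

lemma psum_ex: "psum A f X s \<Longrightarrow> finite F \<Longrightarrow> F \<subseteq> X \<Longrightarrow> \<exists>v. fsum A f F v"
  unfolding psum_def by blast

lemma lub_ub: "lub S s \<Longrightarrow> x \<in> S \<Longrightarrow> nle A x s"
  unfolding is_lub_in_def by blast

lemma lub_least: "lub S s \<Longrightarrow> (\<And>x. x \<in> S \<Longrightarrow> nle A x b) \<Longrightarrow> nle A s b"
  unfolding is_lub_in_def by blast

lemma lubI: "(\<And>x. x \<in> S \<Longrightarrow> nle A x s) \<Longrightarrow> (\<And>b. (\<And>x. x \<in> S \<Longrightarrow> nle A x b) \<Longrightarrow> nle A s b) \<Longrightarrow> lub S s"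
  unfolding is_lub_in_def by blast

lemma psum_ub: "psum A f X s \<Longrightarrow> finite F \<Longrightarrow> F \<subseteq> X \<Longrightarrow> fsum A f F v \<Longrightarrow> nle A v s"
  using lub_ub[OF psum_lub] by blast

lemma psum_unique: "psum A f X s \<Longrightarrow> psum A f X t \<Longrightarrow> s = t"
  using lub_unique[OF psum_lub psum_lub] by blast

lemma psum_mono:
  assumes "psum A f X S" "psum A h X S'" "\<forall>x\<in>X. nle A (f x) (h x)"
  shows "nle A S S'"
proof (rule lub_least[OF psum_lub[OF assms(1)]])
  fix v' assume "v' \<in> {v. \<exists>F. finite F \<and> F \<subseteq> X \<and> fsum A f F v}"
  then obtain F where F: "finite F" "F \<subseteq> X" "fsum A f F v'" by blast
  obtain vh where vh: "fsum A h F vh" using psum_ex[OF assms(2) F(1,2)] by blast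
  have "nle A v' vh" using fsum_mono[OF F(3) vh] assms(3) F(2) by blast
  moreover have "nle A vh S'" using psum_ub[OF assms(2) F(1,2) vh] .
  ultimately show "nle A v' S'" using le_trans by blast
qed

lemma isW_down:
  assumes "isW A h" "\<forall>x. nle A (f x) (h x)"
  shows "isW A f"
proof -
  have sub: "supp A f \<subseteq> supp A h"
  proof
    fix x assume "x \<in> supp A f"
    show "x \<in> supp A h"
    proof (rule ccontr)
      assume "x \<notin> supp A h"
      then have "h x = pzero A" unfolding supp_def by simp
      then have "nle A (f x) (pzero A)" using assms(2)[rule_format, of x] by simp
      then have "f x = pzero A" using le_antisym le_zero by blast
      then show False using \<open>x \<in> supp A f\<close> unfolding supp_def by simp
    qed
  qed
  have cnt: "countable (supp A f)" using assms(1) sub countable_subset unfolding isW_def by blast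
  obtain s where s: "psum A h (supp A h) s" using assms(1) unfolding isW_def by blast
  have fin: "\<exists>v. fsum A f F v" if FF: "finite F" "F \<subseteq> supp A f" for F
  proof -
    obtain vh where vh: "fsum A h F vh" using psum_ex[OF s FF(1)] FF(2) sub by blast
    show ?thesis using fsum_down[OF vh] assms(2) by blast
  qed
  define PS where "PS = {v. \<exists>F. finite F \<and> F \<subseteq> supp A f \<and> fsum A f F v}"
  have "directed_rel (nle A) PS"
    unfolding directed_rel_def
  proof (intro conjI ballI)
    show "PS \<noteq> {}" unfolding PS_def using fsum.fsum_empty by blast
  next
    fix v1 v2 assume "v1 \<in> PS" "v2 \<in> PS"
    then obtain F1 F2 where F: "finite F1" "F1 \<subseteq> supp A f" "fsum A f F1 v1"
      "finite F2" "F2 \<subseteq> supp A f" "fsum A f F2 v2" unfolding PS_def by blast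
    obtain v3 where v3: "fsum A f (F1 \<union> F2) v3" using fin[of "F1 \<union> F2"] F by blast
    have "nle A v1 v3" using fsum_sub[OF F(3) F(4)] v3 by blast
    moreover have "nle A v2 v3" using fsum_sub[OF F(6) F(1)] v3 by (simp add: Un_commute)
    moreover have "v3 \<in> PS" unfolding PS_def using v3 F by blast
    ultimately show "\<exists>z\<in>PS. nle A v1 z \<and> nle A v2 z" by blast
  qed
  then obtain s' where lubPS: "lub PS s'" using dcpo by blast
  have "psum A f (supp A f) s'" unfolding psum_def using fin lubPS unfolding PS_def by blast
  then show ?thesis unfolding isW_def using cnt by blast
qed

lemma W1:
  assumes "isW A m2" "\<forall>x. nle A (m1 x) (m2 x)"
  shows "Wle A m1 m2"
proof -
  define m where "m x = (SOME w. pplus A (m1 x) w = Some (m2 x))" for x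
  have m: "pplus A (m1 x) (m x) = Some (m2 x)" for x
    unfolding m_def using assms(2)[rule_format, of x] unfolding nle_def by (rule someI_ex)
  have "isW A m" using isW_down[OF assms(1)] m le_addI2 by blast
  then show ?thesis unfolding Wle_def using m by blast
qed

lemma W2: "Wle A m1 m2 \<Longrightarrow> nle A (m1 x) (m2 x)"
  unfolding Wle_def nle_def by blast

lemma dir_image:
  assumes "directed_rel R I" "\<forall>i\<in>I. \<forall>j\<in>I. R i j \<longrightarrow> nle A (h i) (h j)"
  shows "directed_rel (nle A) (h ` I)"
    using assms unfolding directed_rel_def
  by (smt (verit) image_iff image_is_empty)


lemma FC:
  assumes fs: "fsum A g F v"
  and dir: "directed_rel R I"
  and mono: "\<forall>i\<in>I. \<forall>j\<in>I. R i j \<longrightarrow> (\<forall>x. nle A (G i x) (G j x))"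
  and glub: "\<forall>x. lub ((\<lambda>i. G i x) ` I) (g x)"
  and bnd: "\<forall>i\<in>I. \<forall>v'. fsum A (G i) F v' \<longrightarrow> nle A v' u"
  shows "nle A v u"
  using fs bnd
proof (induction arbitrary: u rule: fsum.induct)
  case fsum_empty
  obtain i where "i \<in> I" using dir unfolding directed_rel_def by blast
  then show ?case using fsum_empty fsum.fsum_empty by blast
next
  case (fsum_insert x F v w)
  have Gg: "nle A (G i x') (g x')" if "i \<in> I" for i x'
    using lub_ub[OF glub[rule_format, of x']] that by blast
  define T where "T = {v'. \<exists>i\<in>I. fsum A (G i) F v'}"
  have LT: "lub T v"
  proof (rule lubI)
    fix t assume "t \<in> T"
    then obtain i where i: "i \<in> I" "fsum A (G i) F t" unfolding T_def by blast
    show "nle A t v" using fsum_mono[OF i(2) fsum_insert.hyps(2)] Gg i(1) by blast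
  next
    fix b assume "\<And>t. t \<in> T \<Longrightarrow> nle A t b"
    then show "nle A v b" using fsum_insert.IH unfolding T_def by blast
  qed
  have dT: "directed_rel (nle A) T"
    unfolding directed_rel_def
  proof (intro conjI ballI)
    obtain i where "i \<in> I" using dir unfolding directed_rel_def by blast
    then obtain t where "fsum A (G i) F t" using fsum_down[OF fsum_insert.hyps(2)] Gg by blast
    then show "T \<noteq> {}" unfolding T_def using \<open>i \<in> I\<close> by blast
  next
    fix t1 t2 assume "t1 \<in> T" "t2 \<in> T"
    then obtain i1 i2 where i: "i1 \<in> I" "fsum A (G i1) F t1" "i2 \<in> I" "fsum A (G i2) F t2"
      unfolding T_def by blast
    obtain j where j: "j \<in> I" "R i1 j" "R i2 j" using dir i(1,3) unfolding directed_rel_def by blast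
    obtain tj where tj: "fsum A (G j) F tj" using fsum_down[OF fsum_insert.hyps(2)] Gg j(1) by blast
    have "nle A t1 tj" using fsum_mono[OF i(2) tj] mono i(1) j by blast
    moreover have "nle A t2 tj" using fsum_mono[OF i(4) tj] mono i(3) j by blast
    moreover have "tj \<in> T" unfolding T_def using tj j(1) by blast
    ultimately show "\<exists>z\<in>T. nle A t1 z \<and> nle A t2 z" by blast
  qed
  have "pplus A v (g x) = Some w" using fsum_insert.hyps(3) comm by metis
  from cont_add[OF dT LT this] have L1: "lub {z. \<exists>t\<in>T. pplus A t (g x) = Some z} w" .
  have fi: "fsum A g (insert x F) w" using fsum.fsum_insert[OF fsum_insert.hyps(1) fsum_insert.hyps(2) fsum_insert.hyps(3)] .
  have zu: "nle A z u" if tz: "t \<in> T" "pplus A t (g x) = Some z" for t z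
  proof -
    obtain i where i: "i\<in>I" "fsum A (G i) F t" using tz(1) unfolding T_def by blast
    have dQ: "directed_rel (nle A) ((\<lambda>j. G j x) ` I)" by (rule dir_image[OF dir]) (use mono in blast)
    have "pplus A (g x) t = Some z" using tz(2) comm by metis
    from cont_add[OF dQ glub[rule_format, of x] this]
    have L2: "lub {z'. \<exists>q\<in>(\<lambda>j. G j x) ` I. pplus A q t = Some z'} z" .
    have "nle A z' u" if jz: "j\<in>I" "pplus A (G j x) t = Some z'" for j z'
    proof -
      obtain k where k: "k\<in>I" "R i k" "R j k" using dir i(1) jz(1) unfolding directed_rel_def by blast
      obtain r where r: "fsum A (G k) (insert x F) r" using fsum_down[OF fi] Gg k(1) by blast
      obtain r0 where r0: "fsum A (G k) (insert x F - {x}) r0" "pplus A (G k x) r0 = Some r"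
        using fsum_remove[OF r] by blast
      have r0': "fsum A (G k) F r0" using r0(1) fsum_insert.hyps(1) by simp
      have "nle A t r0" using fsum_mono[OF i(2) r0'] mono i(1) k by blast
      moreover have "nle A (G j x) (G k x)" using mono jz(1) k by blast
      ultimately obtain q where q: "pplus A (G j x) t = Some q" "nle A q r"
        using add_mono[OF _ _ r0(2)] by blast
      have "nle A r u" using fsum_insert.prems k(1) r by blast
      then show ?thesis using q jz(2) le_trans by simp
    qed
    then show "nle A z u" using lub_least[OF L2] by blast
  qed
  show ?case using lub_least[OF L1] zu by blast
qed

lemma SC:
  assumes dir: "directed_rel R I"
  and mono: "\<forall>i\<in>I. \<forall>j\<in>I. R i j \<longrightarrow> (\<forall>x. nle A (G i x) (G j x))"
  and glub: "\<forall>x. lub ((\<lambda>i. G i x) ` I) (g x)"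
  and pi: "\<forall>i\<in>I. psum A (G i) X (S i)"
  and pg: "psum A g X S0"
  shows "lub (S ` I) S0"
proof (rule lubI)
  have Gg: "nle A (G i x') (g x')" if "i \<in> I" for i x'
    using lub_ub[OF glub[rule_format, of x']] that by blast
  fix y assume "y \<in> S ` I"
  then obtain i where i: "i \<in> I" "y = S i" by blast
  show "nle A y S0" using psum_mono[OF pi[rule_format, OF i(1)] pg] Gg i by blast
next
  fix u assume U: "\<And>y. y \<in> S ` I \<Longrightarrow> nle A y u"
  show "nle A S0 u"
  proof (rule lub_least[OF psum_lub[OF pg]])
    fix vg assume "vg \<in> {v. \<exists>F. finite F \<and> F \<subseteq> X \<and> fsum A g F v}"
    then obtain F where F: "finite F" "F \<subseteq> X" "fsum A g F vg" by blast
    have "\<forall>i\<in>I. \<forall>v'. fsum A (G i) F v' \<longrightarrow> nle A v' u"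
    proof (intro ballI allI impI)
      fix i v' assume "i \<in> I" "fsum A (G i) F v'"
      then have "nle A v' (S i)" using psum_ub[OF pi[rule_format] F(1,2)] by blast
      moreover have "nle A (S i) u" using U \<open>i \<in> I\<close> by blast
      ultimately show "nle A v' u" using le_trans by blast
    qed
    then show "nle A vg u" using FC[OF F(3) dir mono glub] by blast
  qed
qed

lemma PL:
  assumes "\<forall>f\<in>D. \<forall>\<sigma>. isW A (f \<sigma>)" "directed_rel (ple A) D"
    "is_lub_in (\<lambda>f. \<forall>\<sigma>. isW A (f \<sigma>)) (ple A) D s"
  shows "lub ((\<lambda>d. d \<sigma> x) ` D) (s \<sigma> x)"
proof -
  have Ps: "\<forall>\<sigma>. isW A (s \<sigma>)" using isl_P[OF assms(3)] .
  have sub: "\<forall>d\<in>D. ple A d s" using isl_ub[OF assms(3)] by blast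
  have dir: "directed_rel (nle A) ((\<lambda>d. d \<sigma> x) ` D)"
  proof (rule dir_image[OF assms(2)], intro ballI impI)
    fix i j assume "i \<in> D" "j \<in> D" "ple A i j"
    then have "Wle A (i \<sigma>) (j \<sigma>)" unfolding ple_def by blast
    then show "nle A (i \<sigma> x) (j \<sigma> x)" by (rule W2)
  qed
  obtain t where t: "lub ((\<lambda>d. d \<sigma> x) ` D) t" using dcpo[OF dir] by blast
  have ub: "nle A (d \<sigma>' x') (s \<sigma>' x')" if "d \<in> D" for d \<sigma>' x'
  proof -
    have "ple A d s" using sub that by blast
    then have "Wle A (d \<sigma>') (s \<sigma>')" unfolding ple_def by blast
    then show ?thesis by (rule W2)
  qed
  have ts: "nle A t (s \<sigma> x)" using lub_least[OF t] ub by blast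
  define b where "b = s(\<sigma> := (s \<sigma>)(x := t))"
  have Pb: "isW A (b \<sigma>')" for \<sigma>'
  proof (cases "\<sigma>' = \<sigma>")
    case True
    have "\<forall>x'. nle A (b \<sigma> x') (s \<sigma> x')" unfolding b_def using ts le_refl by simp
    then have "isW A (b \<sigma>)" using isW_down[OF Ps[rule_format, of \<sigma>]] by blast
    then show ?thesis using True by simp
  next
    case False
    then show ?thesis unfolding b_def using Ps by simp
  qed
  have "ple A d b" if "d \<in> D" for d
    unfolding ple_def
  proof
    fix \<sigma>'
    show "Wle A (d \<sigma>') (b \<sigma>')"
    proof (rule W1[OF Pb], rule allI)
      fix x'
      show "nle A (d \<sigma>' x') (b \<sigma>' x')"
      proof (cases "\<sigma>' = \<sigma> \<and> x' = x")
        case True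
        then show ?thesis unfolding b_def using lub_ub[OF t] that by simp
      next
        case False
        then have "b \<sigma>' x' = s \<sigma>' x'" unfolding b_def by auto
        then show ?thesis using ub that by simp
      qed
    qed
  qed
  then have "ple A s b" using isl_least[OF assms(3), of b] Pb by blast
  then have "Wle A (s \<sigma>) (b \<sigma>)" unfolding ple_def by blast
  then have "nle A (s \<sigma> x) (b \<sigma> x)" by (rule W2)
  then have "nle A (s \<sigma> x) t" unfolding b_def by simp
  then have "s \<sigma> x = t" using ts le_antisym by blast
  then show ?thesis using t by simp
qed


lemma Phi_char:
  assumes tot: "Phi_total A c e e'" and Pf: "\<forall>\<sigma>. isW A (f \<sigma>)"
  shows "isW A (the (Phi A c e e' f \<sigma>)) \<and>
    (\<forall>y. \<exists>v. psum A (\<lambda>x. ptimes A (c \<sigma> x) (f x y)) (supp A (c \<sigma>)) v \<and>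
       pplus A (ptimes A (expr_sem A e \<sigma>) v) (ptimes A (expr_sem A e' \<sigma>) (eta A \<sigma> y))
         = Some (the (Phi A c e e' f \<sigma>) y))"
proof -
  have ne: "Phi A c e e' f \<sigma> \<noteq> None" using tot Pf unfolding Phi_total_def by blast
  obtain r where r: "kext A f (c \<sigma>) = Some r"
    using ne unfolding Phi_def by (cases "kext A f (c \<sigma>)") auto
  define R where "R = (\<lambda>y. THE s. psum A (\<lambda>x. ptimes A (c \<sigma> x) (f x y)) (supp A (c \<sigma>)) s)"
  have k: "(\<forall>y. \<exists>s. psum A (\<lambda>x. ptimes A (c \<sigma> x) (f x y)) (supp A (c \<sigma>)) s) \<and> r = R"
    using r unfolding kext_def Let_def R_def by (simp split: if_splits)
  have rp: "psum A (\<lambda>x. ptimes A (c \<sigma> x) (f x y)) (supp A (c \<sigma>)) (r y)" for y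
  proof -
    obtain s where s: "psum A (\<lambda>x. ptimes A (c \<sigma> x) (f x y)) (supp A (c \<sigma>)) s" using k by blast
    have "(THE s. psum A (\<lambda>x. ptimes A (c \<sigma> x) (f x y)) (supp A (c \<sigma>)) s) = s"
      using s psum_unique by (intro the_equality) blast+
    then have "r y = s" using k unfolding R_def by simp
    then show ?thesis using s by simp
  qed
  have ph: "Phi A c e e' f \<sigma> = wplus A (wscale A (expr_sem A e \<sigma>) r) (wscale A (expr_sem A e' \<sigma>) (eta A \<sigma>))"
    unfolding Phi_def using r by simp
  define Q where "Q = (\<lambda>y. the (pplus A (ptimes A (expr_sem A e \<sigma>) (r y)) (ptimes A (expr_sem A e' \<sigma>) (eta A \<sigma> y))))"
  have w: "(\<forall>y. pplus A (ptimes A (expr_sem A e \<sigma>) (r y)) (ptimes A (expr_sem A e' \<sigma>) (eta A \<sigma> y)) \<noteq> None)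
     \<and> isW A Q \<and> Phi A c e e' f \<sigma> = Some Q"
    using ne unfolding ph wplus_def Let_def Q_def wscale_def by (simp split: if_splits)
  have "pplus A (ptimes A (expr_sem A e \<sigma>) (r y)) (ptimes A (expr_sem A e' \<sigma>) (eta A \<sigma> y))
         = Some (the (Phi A c e e' f \<sigma>) y)" for y
    using w unfolding Q_def by auto
  then show ?thesis using w rp by auto
qed

end

theorem lemmaA5:
  fixes A :: "'u psr"
    and c :: "'s \<Rightarrow> ('s \<Rightarrow> 'u)"
    and e e' :: "('s, 'u) expr"
  assumes "outcome_algebra A"
    and "\<forall>\<sigma>. isW A (c \<sigma>)"
    and "Phi_total A c e e'"
  shows "scott_continuous_on (\<lambda>f. \<forall>\<sigma>. isW A (f \<sigma>)) (ple A)
           (\<lambda>f \<sigma>. the (Phi A c e e' f \<sigma>))"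
proof -
  interpret OA A using assms(1) by unfold_locales
  let ?P = "\<lambda>f. \<forall>\<sigma>. isW A (f \<sigma>)"
  let ?F = "\<lambda>f \<sigma>. the (Phi A c e e' f \<sigma>)"
  show ?thesis unfolding scott_continuous_on_def
  proof (intro allI impI)
    fix D :: "('s \<Rightarrow> 's \<Rightarrow> 'u) set" and s :: "'s \<Rightarrow> 's \<Rightarrow> 'u"
    assume H: "(\<forall>x\<in>D. ?P x) \<and> directed_rel (ple A) D \<and> is_lub_in ?P (ple A) D s"
    have DP: "\<forall>x\<in>D. ?P x" and dirD: "directed_rel (ple A) D" and ls: "is_lub_in ?P (ple A) D s"
      using H by auto
    have Ps: "?P s" using isl_P[OF ls] .
    have key: "lub ((\<lambda>d. ?F d \<sigma> y) ` D) (?F s \<sigma> y)" for \<sigma> y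
    proof -
      let ?ea = "expr_sem A e \<sigma>"
      let ?eb = "ptimes A (expr_sem A e' \<sigma>) (eta A \<sigma> y)"
      let ?X = "supp A (c \<sigma>)"
      let ?G = "\<lambda>d x. ptimes A (c \<sigma> x) (d x y)"
      have ex: "\<forall>d\<in>D. \<exists>v. psum A (?G d) ?X v \<and> pplus A (ptimes A ?ea v) ?eb = Some (?F d \<sigma> y)"
        using Phi_char[OF assms(3)] DP by blast
      obtain Kd where Kd: "\<forall>d\<in>D. psum A (?G d) ?X (Kd d) \<and> pplus A (ptimes A ?ea (Kd d)) ?eb = Some (?F d \<sigma> y)"
        using bchoice[OF ex] by blast
      obtain Ks where Ks: "psum A (?G s) ?X Ks" "pplus A (ptimes A ?ea Ks) ?eb = Some (?F s \<sigma> y)"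
        using Phi_char[OF assms(3) Ps] by blast
      have mono: "\<forall>i\<in>D. \<forall>j\<in>D. ple A i j \<longrightarrow> (\<forall>x. nle A (?G i x) (?G j x))"
      proof (intro ballI impI allI)
        fix i j x assume "i \<in> D" "j \<in> D" "ple A i j"
        then have "Wle A (i x) (j x)" unfolding ple_def by blast
        then have "nle A (i x y) (j x y)" by (rule W2)
        then show "nle A (?G i x) (?G j x)" by (rule mul_mono)
      qed
      have glub: "\<forall>x. lub ((\<lambda>i. ?G i x) ` D) (?G s x)"
      proof
        fix x
        have pl: "lub ((\<lambda>d. d x y) ` D) (s x y)" using PL[OF DP dirD ls] .
        have dpt: "directed_rel (nle A) ((\<lambda>d. d x y) ` D)"
        proof (rule dir_image[OF dirD], intro ballI impI)
          fix i j assume "i \<in> D" "j \<in> D" "ple A i j"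
          then have "Wle A (i x) (j x)" unfolding ple_def by blast
          then show "nle A (i x y) (j x y)" by (rule W2)
        qed
        have "lub ((\<lambda>t. ptimes A (c \<sigma> x) t) ` ((\<lambda>d. d x y) ` D)) (?G s x)"
          using cont_mul[OF dpt pl] .
        then show "lub ((\<lambda>i. ?G i x) ` D) (?G s x)" by (simp add: image_image)
      qed
      have SCl: "lub (Kd ` D) Ks"
        using SC[OF dirD mono glub _ Ks(1)] Kd by blast
      have Kmono: "nle A (Kd i) (Kd j)" if "i \<in> D" "j \<in> D" "ple A i j" for i j
        using psum_mono[of "?G i" ?X "Kd i" "?G j" "Kd j"] Kd mono that by blast
      have dK: "directed_rel (nle A) (Kd ` D)"
        using dir_image[OF dirD, of Kd] Kmono by blast
      have a: "lub ((\<lambda>t. ptimes A ?ea t) ` (Kd ` D)) (ptimes A ?ea Ks)"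
        using cont_mul[OF dK SCl] .
      have dA: "directed_rel (nle A) ((\<lambda>t. ptimes A ?ea t) ` (Kd ` D))"
      proof -
        have "directed_rel (nle A) ((\<lambda>d. ptimes A ?ea (Kd d)) ` D)"
          using dir_image[OF dirD, of "\<lambda>d. ptimes A ?ea (Kd d)"] Kmono mul_mono by blast
        then show ?thesis by (simp add: image_image)
      qed
      have L3: "lub {z. \<exists>t\<in>(\<lambda>t. ptimes A ?ea t) ` (Kd ` D). pplus A t ?eb = Some z} (?F s \<sigma> y)"
        using cont_add[OF dA a Ks(2)] .
      have "{z. \<exists>t\<in>(\<lambda>t. ptimes A ?ea t) ` (Kd ` D). pplus A t ?eb = Some z} = (\<lambda>d. ?F d \<sigma> y) ` D"
        using Kd by force
      then show ?thesis using L3 by simp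
    qed
    have PF: "?P (?F f)" if "?P f" for f using Phi_char[OF assms(3) that] by blast
    show "is_lub_in ?P (ple A) (?F ` D) (?F s)"
      unfolding is_lub_in_def
    proof (intro conjI)
      show "?P (?F s)" using PF[OF Ps] .
    next
      show "\<forall>g\<in>?F ` D. ple A g (?F s)"
      proof
      fix g assume "g \<in> ?F ` D"
      then obtain d where d: "d \<in> D" "g = ?F d" by blast
      show "ple A g (?F s)" unfolding ple_def
      proof
        fix \<sigma>
        show "Wle A (g \<sigma>) (?F s \<sigma>)"
          using W1[OF PF[OF Ps, rule_format, of \<sigma>]] lub_ub[OF key] d by blast
      qed
      qed
    next
      show "\<forall>b. ?P b \<and> (\<forall>x\<in>?F ` D. ple A x b) \<longrightarrow> ple A (?F s) b"
      proof (intro allI impI)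
      fix b assume B: "?P b \<and> (\<forall>x\<in>?F ` D. ple A x b)"
      show "ple A (?F s) b" unfolding ple_def
      proof
        fix \<sigma>
        have "nle A (?F s \<sigma> y) (b \<sigma> y)" for y
        proof (rule lub_least[OF key])
          fix z assume "z \<in> (\<lambda>d. ?F d \<sigma> y) ` D"
          then obtain d where d: "d \<in> D" "z = ?F d \<sigma> y" by blast
          have "ple A (?F d) b" using B d(1) by blast
          then have "Wle A (?F d \<sigma>) (b \<sigma>)" unfolding ple_def by blast
          then show "nle A z (b \<sigma> y)" using W2 d(2) by simp
        qed
        then show "Wle A (?F s \<sigma>) (b \<sigma>)" using W1 B by blast
      qed
    qed
      qed
  qed
qed

end
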